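(* Let $g,h\in G(\Gamma)$ and $v\in\Gamma$, and suppose $h$ does not end with $G(\mathrm{lk}(v))$. (1) If $h^{-1}$ begins with $G_v$ but $h^{-1}g$ does not begin with $G_v$, then there is a reduced word $g\equiv g_1\cdots g_n$ and some $m\le n$ such that $h\equiv g_1\cdots g_m$ and $g_m\in G_v$. (2) If $h^{-1}g$ begins with $G_v$ but $h^{-1}$ does not begin with $G_v$, then there is a reduced word $g\equiv g_1\cdots g_n$ and some $m<n$ such that $h\equiv g_1\cdots g_m$ and $g_{m+1}\in G_v$.
   Context: $G(\Gamma)$ is the graph product of groups $\{G_v\}_{v\in\Gamma}$ over a finite simplicial graph $\Gamma$ (the quotient of $\ast_vG_v$ by the normal subgroup generated by $[G_v,G_w]$ for edges $[vw]$). $\mathrm{lk}(v)$ is the set of vertices adjacent to $v$. Words, syllables, shuffles and reduced words are as usual for graph products: a word $(g_1,\dots,g_n)$, $g_i\in G_{v_i}$, is reduced if it cannot be shortened by swapping consecutive syllables from adjacent vertex groups, merging consecutive syllables from the same vertex group, or deleting identity syllables; $g\equiv g_1\cdots g_n$ means this is a reduced word for $g$, and reduced words of $g$ differ by shuffles. An element $g$ begins (resp. ends) with $G_v$ if some reduced word for $g$ has its first (resp. last) syllable in $G_v$; $g$ ends with $G(\mathrm{lk}(v))$ if some reduced word for $g$ has its last syllable in $G_w$ for some $w\in\mathrm{lk}(v)$. *)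

theory Defs
  imports "HOL-Algebra.Group"
begin

text \<open>Graph product G(Gamma) over a finite simplicial graph with vertex set V and
adjacency E, vertex groups G v.  Elements are represented by words: lists of
syllables (v, x) with v in V and x in carrier (G v).  Two words represent the same
element iff they are related by the equivalence generated by the elementary moves
(swap adjacent syllables of adjacent vertices, merge syllables of the same vertex,
delete identity syllables).  Multiplication is concatenation.\<close>

type_synonym ('v, 'a) word = "('v \<times> 'a) list"

definition word_ok :: "'v set \<Rightarrow> ('v \<Rightarrow> 'a monoid) \<Rightarrow> ('v, 'a) word \<Rightarrow> bool" where
  "word_ok V G w \<longleftrightarrow> (\<forall>p \<in> set w. fst p \<in> V \<and> snd p \<in> carrier (G (fst p)))"

definition swap_step :: "'v set \<Rightarrow> ('v \<Rightarrow> 'v \<Rightarrow> bool) \<Rightarrow> ('v \<Rightarrow> 'a monoid)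
    \<Rightarrow> ('v, 'a) word \<Rightarrow> ('v, 'a) word \<Rightarrow> bool" where
  "swap_step V E G w w' \<longleftrightarrow> word_ok V G w \<and>
     (\<exists>xs ys u a v b. E u v \<and> w = xs @ [(u,a),(v,b)] @ ys \<and> w' = xs @ [(v,b),(u,a)] @ ys)"

definition shorten_step :: "'v set \<Rightarrow> ('v \<Rightarrow> 'a monoid)
    \<Rightarrow> ('v, 'a) word \<Rightarrow> ('v, 'a) word \<Rightarrow> bool" where
  "shorten_step V G w w' \<longleftrightarrow> word_ok V G w \<and>
     ((\<exists>xs ys v a b. w = xs @ [(v,a),(v,b)] @ ys \<and> w' = xs @ [(v, a \<otimes>\<^bsub>G v\<^esub> b)] @ ys)
      \<or> (\<exists>xs ys v. w = xs @ [(v, \<one>\<^bsub>G v\<^esub>)] @ ys \<and> w' = xs @ ys))"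

definition elem_step :: "'v set \<Rightarrow> ('v \<Rightarrow> 'v \<Rightarrow> bool) \<Rightarrow> ('v \<Rightarrow> 'a monoid)
    \<Rightarrow> ('v, 'a) word \<Rightarrow> ('v, 'a) word \<Rightarrow> bool" where
  "elem_step V E G w w' \<longleftrightarrow> swap_step V E G w w' \<or> shorten_step V G w w'"

definition gp_eq :: "'v set \<Rightarrow> ('v \<Rightarrow> 'v \<Rightarrow> bool) \<Rightarrow> ('v \<Rightarrow> 'a monoid)
    \<Rightarrow> ('v, 'a) word \<Rightarrow> ('v, 'a) word \<Rightarrow> bool" where
  "gp_eq V E G = (\<lambda>w w'. elem_step V E G w w' \<or> elem_step V E G w' w)\<^sup>*\<^sup>*"

definition reduced :: "'v set \<Rightarrow> ('v \<Rightarrow> 'v \<Rightarrow> bool) \<Rightarrow> ('v \<Rightarrow> 'a monoid)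
    \<Rightarrow> ('v, 'a) word \<Rightarrow> bool" where
  "reduced V E G w \<longleftrightarrow> word_ok V G w \<and>
     (\<forall>w'. (swap_step V E G)\<^sup>*\<^sup>* w w' \<longrightarrow> \<not> (\<exists>w''. shorten_step V G w' w''))"

definition inv_word :: "('v \<Rightarrow> 'a monoid) \<Rightarrow> ('v, 'a) word \<Rightarrow> ('v, 'a) word" where
  "inv_word G w = rev (map (\<lambda>p. (fst p, inv\<^bsub>G (fst p)\<^esub> (snd p))) w)"

definition begins_with :: "'v set \<Rightarrow> ('v \<Rightarrow> 'v \<Rightarrow> bool) \<Rightarrow> ('v \<Rightarrow> 'a monoid)
    \<Rightarrow> ('v, 'a) word \<Rightarrow> 'v \<Rightarrow> bool" where
  "begins_with V E G w v \<longleftrightarrow>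
     (\<exists>w'. gp_eq V E G w w' \<and> reduced V E G w' \<and> w' \<noteq> [] \<and> fst (hd w') = v)"

definition ends_with_link :: "'v set \<Rightarrow> ('v \<Rightarrow> 'v \<Rightarrow> bool) \<Rightarrow> ('v \<Rightarrow> 'a monoid)
    \<Rightarrow> ('v, 'a) word \<Rightarrow> 'v \<Rightarrow> bool" where
  "ends_with_link V E G w v \<longleftrightarrow>
     (\<exists>w'. gp_eq V E G w w' \<and> reduced V E G w' \<and> w' \<noteq> [] \<and> E v (fst (last w')))"

end

theory Submission
  imports Defs
begin

fun fm :: "('v \<Rightarrow> 'v \<Rightarrow> bool) \<Rightarrow> 'v \<Rightarrow> ('v, 'a) word \<Rightarrow> bool" where
  "fm E u [] = False"
| "fm E u (x#w) = (if E u (fst x) then fm E u w else fst x = u)"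

fun badr :: "('v \<Rightarrow> 'v \<Rightarrow> bool) \<Rightarrow> ('v, 'a) word \<Rightarrow> bool" where
  "badr E [] = False"
| "badr E (p#w) = (fm E (fst p) w \<or> badr E w)"

definition badd :: "('v \<Rightarrow> 'v \<Rightarrow> bool) \<Rightarrow> ('v, 'a) word \<Rightarrow> bool" where
  "badd E w = (\<exists>xs u a mid b ys. w = xs@(u,a)#mid@(u,b)#ys \<and> (\<forall>q\<in>set mid. E u (fst q)))"

definition crit :: "'v set \<Rightarrow> ('v \<Rightarrow> 'v \<Rightarrow> bool) \<Rightarrow> ('v \<Rightarrow> 'a monoid) \<Rightarrow> ('v, 'a) word \<Rightarrow> bool" where
  "crit V E G w = (word_ok V G w \<and> (\<forall>p\<in>set w. snd p \<noteq> \<one>\<^bsub>G (fst p)\<^esub>) \<and> \<not> badr E w)"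

lemma fm_dec: "fm E u w \<Longrightarrow> \<exists>mid b ys. w = mid@(u,b)#ys \<and> (\<forall>q\<in>set mid. E u (fst q))"
proof (induction w)
  case Nil then show ?case by simp
next
  case (Cons x w)
  show ?case
  proof (cases "E u (fst x)")
    case True
    with Cons obtain mid b ys where "w = mid@(u,b)#ys" "\<forall>q\<in>set mid. E u (fst q)" by auto
    with True show ?thesis by (intro exI[of _ "x#mid"]) auto
  next
    case False
    with Cons have "fst x = u" by simp
    then show ?thesis by (intro exI[of _ "[]"] exI[of _ "snd x"] exI[of _ w]) auto
  qed
qed

lemma dec_fm: "\<forall>q\<in>set mid. E u (fst q) \<Longrightarrow> \<not> E u u \<Longrightarrow> fm E u (mid@(u,b)#ys)"
  by (induction mid) auto

lemma fm_app: "fm E u (post@ys) \<Longrightarrow> fm E u post \<or> ((\<forall>q\<in>set post. E u (fst q)) \<and> fm E u ys)"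
  by (induction post) (auto split: if_splits)

lemma badr_suffix: "badr E ys \<Longrightarrow> badr E (xs@ys)"
  by (induction xs) auto

lemma badr_dec: "badr E w \<Longrightarrow> badd E w"
proof (induction w)
  case Nil then show ?case by simp
next
  case (Cons p w)
  show ?case
  proof (cases "fm E (fst p) w")
    case True
    then obtain mid b ys where "w = mid@(fst p,b)#ys" "\<forall>q\<in>set mid. E (fst p) (fst q)"
      using fm_dec[of E "fst p" w] by blast
    then show ?thesis unfolding badd_def
      by (intro exI[of _ "[]"] exI[of _ "fst p"] exI[of _ "snd p"] exI[of _ mid] exI[of _ b] exI[of _ ys]) auto
  next
    case False
    with Cons.prems have "badr E w" by simp
    then have "badd E w" by (rule Cons.IH)
    then obtain xs u a mid b ys where "w = xs@(u,a)#mid@(u,b)#ys" "\<forall>q\<in>set mid. E u (fst q)"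
      unfolding badd_def by blast
    then show ?thesis unfolding badd_def
      by (intro exI[of _ "p#xs"] exI[of _ u] exI[of _ a] exI[of _ mid] exI[of _ b] exI[of _ ys]) auto
  qed
qed

lemma dec_badr: "badd E w \<Longrightarrow> (\<And>u. \<not> E u u) \<Longrightarrow> badr E w"
proof -
  assume "badd E w" and irr: "\<And>u. \<not> E u u"
  then obtain xs u a mid b ys where w: "w = xs@(u,a)#mid@(u,b)#ys" "\<forall>q\<in>set mid. E u (fst q)"
    unfolding badd_def by auto
  have "fm E u (mid@(u,b)#ys)" using w(2) irr by (simp add: dec_fm)
  then have "badr E ((u,a)#mid@(u,b)#ys)" by simp
  then show ?thesis using w(1) badr_suffix by metis
qed

lemma badr_app: "badr E (xs@ys) \<Longrightarrow> badr E ys \<or> (\<exists>pre u a post. xs = pre@(u,a)#post \<and> fm E u (post@ys))"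
proof (induction xs)
  case Nil then show ?case by simp
next
  case (Cons x xs)
  show ?case
  proof (cases "fm E (fst x) (xs@ys)")
    case True
    then show ?thesis by (intro disjI2 exI[of _ "[]"] exI[of _ "fst x"] exI[of _ "snd x"] exI[of _ xs]) auto
  next
    case False
    with Cons have "badr E ys \<or> (\<exists>pre u a post. xs = pre@(u,a)#post \<and> fm E u (post@ys))" by auto
    then show ?thesis
    proof (elim disjE exE conjE)
      assume "badr E ys" then show ?thesis by blast
    next
      fix pre u a post assume "xs = pre@(u,a)#post" "fm E u (post@ys)"
      then show ?thesis by (intro disjI2 exI[of _ "x#pre"] exI[of _ u] exI[of _ a] exI[of _ post]) auto
    qed
  qed
qed

lemma fm_map: "(\<And>p. fst (f p) = fst p) \<Longrightarrow> fm E u (map f w) = fm E u w"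
  by (induction w) auto

lemma badr_map: "(\<And>p. fst (f p) = fst p) \<Longrightarrow> badr E (map f w) = badr E w"
  by (induction w) (auto simp: fm_map)

lemma badd_rev: "badd E (rev w) \<Longrightarrow> badd E w"
proof -
  assume "badd E (rev w)"
  then obtain xs u a mid b ys where w: "rev w = xs@(u,a)#mid@(u,b)#ys" "\<forall>q\<in>set mid. E u (fst q)"
    unfolding badd_def by auto
  then have "w = rev ys @ (u,b) # rev mid @ (u,a) # rev xs"
    by (metis append.assoc append_Cons rev.simps(2) rev_append rev_rev_ident rev_singleton_conv)
  then show ?thesis unfolding badd_def using w(2)
    by (intro exI[of _ "rev ys"] exI[of _ u] exI[of _ b] exI[of _ "rev mid"] exI[of _ a] exI[of _ "rev xs"]) auto
qed


lemma fm_swap: "E (fst p) (fst q) \<Longrightarrow> E (fst q) (fst p) \<Longrightarrow>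
   fm E x (xs@[p,q]@ys) = fm E x (xs@[q,p]@ys)"
proof (induction xs)
  case Nil
  then show ?case by (cases "E x (fst p)"; cases "E x (fst q)") auto
next
  case (Cons a xs)
  then show ?case by simp
qed

lemma badr_swap: "E (fst p) (fst q) \<Longrightarrow> E (fst q) (fst p) \<Longrightarrow>
   badr E (xs@[p,q]@ys) = badr E (xs@[q,p]@ys)"
proof (induction xs)
  case Nil
  then show ?case by auto
next
  case (Cons x xs)
  then show ?case using fm_swap[of E p q "fst x" xs ys] by simp
qed

lemma word_ok_append[simp]: "word_ok V G (xs@ys) = (word_ok V G xs \<and> word_ok V G ys)"
  unfolding word_ok_def by auto

lemma word_ok_Cons[simp]: "word_ok V G (x#ys) = (fst x \<in> V \<and> snd x \<in> carrier (G (fst x)) \<and> word_ok V G ys)"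
  unfolding word_ok_def by auto

lemma word_ok_Nil[simp]: "word_ok V G []"
  unfolding word_ok_def by auto

lemma swap_set: "(swap_step V E G)\<^sup>*\<^sup>* w w' \<Longrightarrow> set w' = set w \<and> length w' = length w"
proof (induction rule: rtranclp_induct)
  case base then show ?case by simp
next
  case (step y z)
  from step.hyps(2) obtain xs ys u a v b where "y = xs@[(u,a),(v,b)]@ys" "z = xs@[(v,b),(u,a)]@ys"
    unfolding swap_step_def by blast
  then have "set z = set y \<and> length z = length y" by auto
  with step.IH show ?case by simp
qed

lemma swap_word_ok: "(swap_step V E G)\<^sup>*\<^sup>* w w' \<Longrightarrow> word_ok V G w' = word_ok V G w"
  using swap_set unfolding word_ok_def by metis

lemma red_swaps: "reduced V E G w \<Longrightarrow> (swap_step V E G)\<^sup>*\<^sup>* w w' \<Longrightarrow> reduced V E G w'"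
  unfolding reduced_def using swap_word_ok rtranclp_trans by metis

lemma gp_swaps: "(swap_step V E G)\<^sup>*\<^sup>* w w' \<Longrightarrow> gp_eq V E G w w'"
proof (induction rule: rtranclp_induct)
  case base then show ?case unfolding gp_eq_def by simp
next
  case (step y z)
  then show ?case unfolding gp_eq_def elem_step_def
    by (metis (mono_tags, lifting) rtranclp.rtrancl_into_rtrancl)
qed

lemma gp_step: "elem_step V E G w w' \<Longrightarrow> gp_eq V E G w w'"
  unfolding gp_eq_def by (simp add: r_into_rtranclp)

lemma gp_trans: "gp_eq V E G a b \<Longrightarrow> gp_eq V E G b c \<Longrightarrow> gp_eq V E G a c"
  unfolding gp_eq_def by (rule rtranclp_trans)

lemma gp_refl: "gp_eq V E G a a"
  unfolding gp_eq_def by simp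

lemma gp_sym: "gp_eq V E G a b \<Longrightarrow> gp_eq V E G b a"
  unfolding gp_eq_def
proof (induction rule: rtranclp_induct)
  case base then show ?case by simp
next
  case (step y z)
  then show ?case by (metis (no_types, lifting) converse_rtranclp_into_rtranclp)
qed

lemma gp_mono: assumes h: "\<And>w w'. elem_step V E G w w' \<Longrightarrow> elem_step V E G (F w) (F w')"
   and g: "gp_eq V E G w w'" shows "gp_eq V E G (F w) (F w')"
  unfolding gp_eq_def
proof -
  from g have "(\<lambda>w w'. elem_step V E G w w' \<or> elem_step V E G w' w)\<^sup>*\<^sup>* w w'" unfolding gp_eq_def .
  then show "(\<lambda>w w'. elem_step V E G w w' \<or> elem_step V E G w' w)\<^sup>*\<^sup>* (F w) (F w')"
  proof (induction rule: rtranclp_induct)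
    case base then show ?case by simp
  next
    case (step y z)
    then show ?case using h by (metis (mono_tags, lifting) rtranclp.rtrancl_into_rtrancl)
  qed
qed

lemma swap_app: assumes "word_ok V G pre" "word_ok V G suf" "swap_step V E G w w'" shows
   "swap_step V E G (pre@w@suf) (pre@w'@suf)"
proof -
  from assms(3) obtain xs ys u a v b where "word_ok V G w" "E u v" "w = xs @ [(u,a),(v,b)] @ ys" "w' = xs @ [(v,b),(u,a)] @ ys"
    unfolding swap_step_def by blast
  then show ?thesis
    unfolding swap_step_def using assms(1,2)
    by (intro conjI exI[of _ "pre@xs"] exI[of _ "ys@suf"] exI[of _ u] exI[of _ a] exI[of _ v] exI[of _ b]) auto
qed

lemma shorten_app: assumes o: "word_ok V G pre" "word_ok V G suf" and s: "shorten_step V G w w'" shows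
   "shorten_step V G (pre@w@suf) (pre@w'@suf)"
proof -
  from s have ow: "word_ok V G w" unfolding shorten_step_def by blast
  from s consider (m) xs ys v a b where "w = xs @ [(v, a), (v, b)] @ ys" "w' = xs @ [(v, a \<otimes>\<^bsub>G v\<^esub> b)] @ ys"
    | (d) xs ys v where "w = xs @ [(v, \<one>\<^bsub>G v\<^esub>)] @ ys" "w' = xs @ ys"
    unfolding shorten_step_def by blast
  then show ?thesis
  proof cases
    case m
    then show ?thesis unfolding shorten_step_def using o ow
      by (intro conjI disjI1 exI[of _ "pre@xs"] exI[of _ "ys@suf"] exI[of _ v] exI[of _ a] exI[of _ b]) auto
  next
    case d
    then show ?thesis unfolding shorten_step_def using o ow
      by (intro conjI disjI2 exI[of _ "pre@xs"] exI[of _ "ys@suf"] exI[of _ v]) auto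
  qed
qed

lemma elem_app: "word_ok V G pre \<Longrightarrow> word_ok V G suf \<Longrightarrow> elem_step V E G w w' \<Longrightarrow>
   elem_step V E G (pre@w@suf) (pre@w'@suf)"
  unfolding elem_step_def using swap_app shorten_app by metis

lemma gp_app: "word_ok V G pre \<Longrightarrow> word_ok V G suf \<Longrightarrow> gp_eq V E G w w' \<Longrightarrow>
   gp_eq V E G (pre@w@suf) (pre@w'@suf)"
  using gp_mono[of V E G "\<lambda>w. pre@w@suf"] elem_app by metis


lemma S1: "word_ok V G (pre@mid@p#ys) \<Longrightarrow> \<forall>q\<in>set mid. E (fst q) (fst p) \<Longrightarrow>
   (swap_step V E G)\<^sup>*\<^sup>* (pre@mid@p#ys) (pre@p#mid@ys)"
proof (induction mid arbitrary: ys rule: rev_induct)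
  case Nil then show ?case by simp
next
  case (snoc x m)
  have st: "swap_step V E G (pre@m@x#p#ys) (pre@m@p#x#ys)"
    unfolding swap_step_def using snoc.prems
    by (intro conjI exI[of _ "pre@m"] exI[of _ ys] exI[of _ "fst x"] exI[of _ "snd x"] exI[of _ "fst p"] exI[of _ "snd p"]) auto
  have "(swap_step V E G)\<^sup>*\<^sup>* (pre@m@p#x#ys) (pre@p#m@x#ys)"
    using snoc.IH[of "x#ys"] snoc.prems by auto
  with st show ?case by (simp add: converse_rtranclp_into_rtranclp)
qed

lemma S2: "word_ok V G (pre@p#mid) \<Longrightarrow> \<forall>q\<in>set mid. E (fst p) (fst q) \<Longrightarrow>
   (swap_step V E G)\<^sup>*\<^sup>* (pre@p#mid) (pre@mid@[p])"
proof (induction mid arbitrary: pre)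
  case Nil then show ?case by simp
next
  case (Cons x m)
  have st: "swap_step V E G (pre@p#x#m) ((pre@[x])@p#m)"
    unfolding swap_step_def using Cons.prems
    by (intro conjI exI[of _ "pre"] exI[of _ m] exI[of _ "fst p"] exI[of _ "snd p"] exI[of _ "fst x"] exI[of _ "snd x"]) auto
  have "(swap_step V E G)\<^sup>*\<^sup>* ((pre@[x])@p#m) ((pre@[x])@m@[p])"
    using Cons.IH[of "pre@[x]"] Cons.prems by auto
  with st show ?case by (simp add: converse_rtranclp_into_rtranclp)
qed

locale gp =
  fixes V :: "'v set" and E :: "'v \<Rightarrow> 'v \<Rightarrow> bool" and G :: "'v \<Rightarrow> 'a monoid"
  assumes Esym: "\<And>u w. E u w \<Longrightarrow> E w u" and Eirr: "\<And>u. \<not> E u u"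
    and grp: "\<And>u. u \<in> V \<Longrightarrow> group (G u)"
begin

lemma word_ok_inv: "word_ok V G w \<Longrightarrow> word_ok V G (inv_word G w)"
  unfolding word_ok_def inv_word_def using grp group.inv_closed by fastforce

lemma inv_app: "inv_word G (xs@ys) = inv_word G ys @ inv_word G xs"
  unfolding inv_word_def by simp

lemma inv_cons: "inv_word G (x#ys) = inv_word G ys @ [(fst x, inv\<^bsub>G (fst x)\<^esub> snd x)]"
  unfolding inv_word_def by simp

lemma inv_inv: "word_ok V G w \<Longrightarrow> inv_word G (inv_word G w) = w"
  by (induction w) (auto simp: inv_app inv_cons inv_word_def[of G "[]"] grp group.inv_inv)

lemma elem_inv: assumes "elem_step V E G w w'" shows "elem_step V E G (inv_word G w) (inv_word G w')"
proof -
  consider "swap_step V E G w w'" | "shorten_step V G w w'" using assms unfolding elem_step_def by blast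
  then show ?thesis
  proof cases
    case 1
    then obtain xs ys u a v b where o: "word_ok V G w" "E u v" "w = xs @ [(u,a),(v,b)] @ ys" "w' = xs @ [(v,b),(u,a)] @ ys"
      unfolding swap_step_def by blast
    have "swap_step V E G (inv_word G w) (inv_word G w')"
      unfolding swap_step_def using o word_ok_inv[OF o(1)] Esym
      by (intro conjI exI[of _ "inv_word G ys"] exI[of _ "inv_word G xs"] exI[of _ v] exI[of _ "inv\<^bsub>G v\<^esub> b"] exI[of _ u] exI[of _ "inv\<^bsub>G u\<^esub> a"])
        (auto simp: inv_app inv_cons)
    then show ?thesis unfolding elem_step_def by simp
  next
    case 2
    then have ow: "word_ok V G w" unfolding shorten_step_def by blast
    from 2 consider (m) xs ys v a b where "w = xs @ [(v, a), (v, b)] @ ys" "w' = xs @ [(v, a \<otimes>\<^bsub>G v\<^esub> b)] @ ys"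
      | (d) xs ys v where "w = xs @ [(v, \<one>\<^bsub>G v\<^esub>)] @ ys" "w' = xs @ ys"
      unfolding shorten_step_def by blast
    then show ?thesis
    proof cases
      case m
      then have v: "v \<in> V" "a \<in> carrier (G v)" "b \<in> carrier (G v)" using ow by auto
      have eq: "inv\<^bsub>G v\<^esub> (a \<otimes>\<^bsub>G v\<^esub> b) = inv\<^bsub>G v\<^esub> b \<otimes>\<^bsub>G v\<^esub> inv\<^bsub>G v\<^esub> a"
        using v grp group.inv_mult_group by metis
      have "shorten_step V G (inv_word G w) (inv_word G w')"
        unfolding shorten_step_def using m word_ok_inv[OF ow] eq
        by (intro conjI disjI1 exI[of _ "inv_word G ys"] exI[of _ "inv_word G xs"] exI[of _ v] exI[of _ "inv\<^bsub>G v\<^esub> b"] exI[of _ "inv\<^bsub>G v\<^esub> a"])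
          (auto simp: inv_app inv_cons)
      then show ?thesis unfolding elem_step_def by simp
    next
      case d
      then have v: "v \<in> V" using ow by auto
      have eq: "inv\<^bsub>G v\<^esub> \<one>\<^bsub>G v\<^esub> = \<one>\<^bsub>G v\<^esub>" using v grp group.is_monoid monoid.inv_one by metis
      have "shorten_step V G (inv_word G w) (inv_word G w')"
        unfolding shorten_step_def using d word_ok_inv[OF ow] eq
        by (intro conjI disjI2 exI[of _ "inv_word G ys"] exI[of _ "inv_word G xs"] exI[of _ v])
          (auto simp: inv_app inv_cons)
      then show ?thesis unfolding elem_step_def by simp
    qed
  qed
qed

lemma gp_inv: "gp_eq V E G w w' \<Longrightarrow> gp_eq V E G (inv_word G w) (inv_word G w')"
  using gp_mono[of V E G "inv_word G"] elem_inv by metis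

lemma cancel: "word_ok V G w \<Longrightarrow> gp_eq V E G (w @ inv_word G w) []"
proof (induction w)
  case Nil then show ?case by (simp add: inv_word_def gp_refl)
next
  case (Cons p w)
  obtain v a where p: "p = (v,a)" by fastforce
  have v: "v \<in> V" "a \<in> carrier (G v)" using Cons.prems p by auto
  have o1: "word_ok V G [p]" "word_ok V G [(v, inv\<^bsub>G v\<^esub> a)]" using v p grp group.inv_closed by auto
  have "gp_eq V E G ([p] @ (w @ inv_word G w) @ [(v, inv\<^bsub>G v\<^esub> a)]) ([p] @ [] @ [(v, inv\<^bsub>G v\<^esub> a)])"
    using gp_app[OF o1 Cons.IH] Cons.prems by simp
  moreover have "(p#w) @ inv_word G (p#w) = [p] @ (w @ inv_word G w) @ [(v, inv\<^bsub>G v\<^esub> a)]"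
    using p by (simp add: inv_cons)
  moreover have "gp_eq V E G [(v,a),(v, inv\<^bsub>G v\<^esub> a)] [(v, \<one>\<^bsub>G v\<^esub>)]"
  proof -
    have "a \<otimes>\<^bsub>G v\<^esub> inv\<^bsub>G v\<^esub> a = \<one>\<^bsub>G v\<^esub>" using v grp group.r_inv by metis
    then have "shorten_step V G [(v,a),(v, inv\<^bsub>G v\<^esub> a)] [(v, \<one>\<^bsub>G v\<^esub>)]"
      unfolding shorten_step_def using v o1
      by (intro conjI disjI1 exI[of _ "[]"] exI[of _ "[]"] exI[of _ v] exI[of _ a] exI[of _ "inv\<^bsub>G v\<^esub> a"]) auto
    then show ?thesis by (intro gp_step) (simp add: elem_step_def)
  qed
  moreover have "gp_eq V E G [(v, \<one>\<^bsub>G v\<^esub>)] []"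
  proof -
    have "shorten_step V G [(v, \<one>\<^bsub>G v\<^esub>)] []"
    proof -
      have "\<one>\<^bsub>G v\<^esub> \<in> carrier (G v)" using v grp by (simp add: group.is_monoid)
      then show ?thesis unfolding shorten_step_def using v
      by (intro conjI disjI2 exI[of _ "[]"] exI[of _ "[]"] exI[of _ v]) auto
    qed
    then show ?thesis by (intro gp_step) (simp add: elem_step_def)
  qed
  ultimately show ?case using p gp_trans by (metis append_Cons append_Nil)
qed

lemma shorten_ok: "shorten_step V G w w' \<Longrightarrow> word_ok V G w' \<and> length w' < length w"
  unfolding shorten_step_def
  by (auto simp: grp group.is_monoid monoid.m_closed)

lemma exists_red: "word_ok V G w \<Longrightarrow> \<exists>w'. gp_eq V E G w w' \<and> reduced V E G w'"
proof (induction "length w" arbitrary: w rule: less_induct)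
  case less
  show ?case
  proof (cases "reduced V E G w")
    case True then show ?thesis using gp_refl by blast
  next
    case False
    with less.prems obtain w1 w2 where s: "(swap_step V E G)\<^sup>*\<^sup>* w w1" "shorten_step V G w1 w2"
      unfolding reduced_def by blast
    have "length w2 < length w" "word_ok V G w2" using shorten_ok[OF s(2)] swap_set[OF s(1)] by auto
    then obtain w3 where "gp_eq V E G w2 w3" "reduced V E G w3" using less.hyps by blast
    moreover have "gp_eq V E G w w2"
      using gp_swaps[OF s(1)] s(2) gp_step gp_trans unfolding elem_step_def by metis
    ultimately show ?thesis using gp_trans by blast
  qed
qed

lemma R1: assumes "reduced V E G w" shows "crit V E G w"
proof -
  have ok: "word_ok V G w" using assms unfolding reduced_def by blast
  have id: "\<forall>p\<in>set w. snd p \<noteq> \<one>\<^bsub>G (fst p)\<^esub>"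
  proof
    fix p assume "p \<in> set w"
    then obtain xs ys where w: "w = xs @ p # ys" by (meson split_list)
    show "snd p \<noteq> \<one>\<^bsub>G (fst p)\<^esub>"
    proof
      assume "snd p = \<one>\<^bsub>G (fst p)\<^esub>"
      then have "shorten_step V G w (xs@ys)" unfolding shorten_step_def using ok w
        by (intro conjI disjI2 exI[of _ xs] exI[of _ ys] exI[of _ "fst p"]) (auto, metis prod.collapse)
      then show False using assms unfolding reduced_def by blast
    qed
  qed
  have "\<not> badr E w"
  proof
    assume "badr E w"
    then obtain xs u a mid b ys where w: "w = xs@(u,a)#mid@(u,b)#ys" "\<forall>q\<in>set mid. E u (fst q)"
      using badr_dec unfolding badd_def by metis
    have "(swap_step V E G)\<^sup>*\<^sup>* ((xs@[(u,a)])@mid@(u,b)#ys) ((xs@[(u,a)])@(u,b)#mid@ys)"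
      by (rule S1) (use ok w Esym in auto)
    then have sw: "(swap_step V E G)\<^sup>*\<^sup>* w (xs@(u,a)#(u,b)#mid@ys)" using w by simp
    have "word_ok V G (xs@(u,a)#(u,b)#mid@ys)" using swap_word_ok[OF sw] ok by simp
    then have "shorten_step V G (xs@(u,a)#(u,b)#mid@ys) (xs@[(u, a \<otimes>\<^bsub>G u\<^esub> b)]@mid@ys)"
      unfolding shorten_step_def
      by (intro conjI disjI1 exI[of _ xs] exI[of _ "mid@ys"] exI[of _ u] exI[of _ a] exI[of _ b]) auto
    then show False using assms sw unfolding reduced_def by blast
  qed
  then show ?thesis using ok id unfolding crit_def by blast
qed

lemma crit_swap: assumes "swap_step V E G w w'" "crit V E G w" shows "crit V E G w'"
proof -
  obtain xs ys u a v b where o: "word_ok V G w" "E u v" "w = xs @ [(u,a),(v,b)] @ ys" "w' = xs @ [(v,b),(u,a)] @ ys"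
    using assms(1) unfolding swap_step_def by blast
  have "badr E w' = badr E w" using badr_swap[of E "(u,a)" "(v,b)" xs ys] o Esym[OF o(2)] by auto
  moreover have "set w' = set w" using o by auto
  ultimately show ?thesis using assms(2) unfolding crit_def word_ok_def by simp
qed

lemma crit_swaps: "(swap_step V E G)\<^sup>*\<^sup>* w w' \<Longrightarrow> crit V E G w \<Longrightarrow> crit V E G w'"
  by (induction rule: rtranclp_induct) (auto intro: crit_swap)

lemma crit_noshort: "crit V E G w \<Longrightarrow> \<not> shorten_step V G w w''"
proof
  assume c: "crit V E G w" and s: "shorten_step V G w w''"
  from s consider (m) xs ys v a b where "w = xs @ [(v, a), (v, b)] @ ys"
      | (d) xs ys v where "w = xs @ [(v, \<one>\<^bsub>G v\<^esub>)] @ ys"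
      unfolding shorten_step_def by blast
  then show False
  proof cases
    case m
    then have "badr E ((v,a)#(v,b)#ys)" using Eirr by simp
    then have "badr E w" using m badr_suffix by (metis append_Cons append_Nil)
    then show False using c unfolding crit_def by blast
  next
    case d then show False using c unfolding crit_def by auto
  qed
qed

lemma R2: "crit V E G w \<Longrightarrow> reduced V E G w"
  unfolding reduced_def using crit_swaps crit_noshort
  by (metis crit_def)

lemma crit_inv: assumes "crit V E G w" shows "crit V E G (inv_word G w)"
proof -
  have ok: "word_ok V G w" using assms unfolding crit_def by blast
  have id: "\<forall>p\<in>set (inv_word G w). snd p \<noteq> \<one>\<^bsub>G (fst p)\<^esub>"
    using assms ok unfolding crit_def inv_word_def word_ok_def
    by (auto simp: grp group.inv_eq_1_iff)
  have "\<not> badr E (inv_word G w)"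
  proof
    assume "badr E (inv_word G w)"
    then have "badd E (rev (map (\<lambda>p. (fst p, inv\<^bsub>G (fst p)\<^esub> (snd p))) w))"
      unfolding inv_word_def using badr_dec by metis
    then have "badd E (map (\<lambda>p. (fst p, inv\<^bsub>G (fst p)\<^esub> (snd p))) w)" using badd_rev by metis
    then have "badr E (map (\<lambda>p. (fst p, inv\<^bsub>G (fst p)\<^esub> (snd p))) w)" using dec_badr Eirr by metis
    then have "badr E w" by (subst (asm) badr_map) auto
    then show False using assms unfolding crit_def by blast
  qed
  then show ?thesis using id word_ok_inv[OF ok] unfolding crit_def by blast
qed

lemma cross_bad: assumes "crit V E G hr" "crit V E G k" "badr E (hr@k)"
  shows "\<exists>pre u a post. hr = pre@(u,a)#post \<and> (\<forall>q\<in>set post. E u (fst q)) \<and> fm E u k"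
proof -
  have "\<not> badr E k" using assms(2) unfolding crit_def by blast
  then obtain pre u a post where h: "hr = pre@(u,a)#post" "fm E u (post@k)"
    using badr_app[OF assms(3)] by blast
  have "\<not> fm E u post"
  proof
    assume "fm E u post"
    then have "badr E hr" using h badr_suffix[of E "(u,a)#post" pre] by simp
    then show False using assms(1) unfolding crit_def by blast
  qed
  then show ?thesis using fm_app[OF h(2)] h by blast
qed

lemma gp_prod: assumes "word_ok V G wh" "word_ok V G wg" "reduced V E G hr" "gp_eq V E G wh hr"
   "reduced V E G k" "gp_eq V E G (inv_word G wh @ wg) k"
  shows "gp_eq V E G wg (hr @ k)"
proof -
  have okh: "word_ok V G hr" using assms(3) unfolding reduced_def by blast
  have oi: "word_ok V G (inv_word G wh)" using word_ok_inv assms(1) by blast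
  have 1: "gp_eq V E G ([] @ (wh @ inv_word G wh) @ wg) ([] @ [] @ wg)"
    by (rule gp_app) (use cancel assms(1,2) in auto)
  have 2: "gp_eq V E G ([] @ wh @ (inv_word G wh @ wg)) ([] @ hr @ (inv_word G wh @ wg))"
    by (rule gp_app) (use assms oi in auto)
  have 3: "gp_eq V E G (hr @ (inv_word G wh @ wg) @ []) (hr @ k @ [])"
    by (rule gp_app) (use assms okh in auto)
  show ?thesis using 1 2 3 gp_sym gp_trans by (metis append.assoc append_Nil append_Nil2)
qed

end

theorem mainTheorem5:
  fixes V :: "'v set" and E :: "'v \<Rightarrow> 'v \<Rightarrow> bool" and G :: "'v \<Rightarrow> 'a monoid"
    and wg wh :: "('v, 'a) word" and v :: 'v
  assumes "finite V"
    and "\<And>u w. E u w \<Longrightarrow> u \<in> V \<and> w \<in> V"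
    and "\<And>u w. E u w \<Longrightarrow> E w u"
    and "\<And>u. \<not> E u u"
    and "\<And>u. u \<in> V \<Longrightarrow> group (G u)"
    and "v \<in> V"
    and "word_ok V G wg" and "word_ok V G wh"
    and "\<not> ends_with_link V E G wh v"
  shows
    "(begins_with V E G (inv_word G wh) v \<and> \<not> begins_with V E G (inv_word G wh @ wg) v \<longrightarrow>
       (\<exists>w m. reduced V E G w \<and> gp_eq V E G wg w \<and> 0 < m \<and> m \<le> length w \<and>
              reduced V E G (take m w) \<and> gp_eq V E G wh (take m w) \<and> fst (w ! (m - 1)) = v))
   \<and> (begins_with V E G (inv_word G wh @ wg) v \<and> \<not> begins_with V E G (inv_word G wh) v \<longrightarrow>
       (\<exists>w m. reduced V E G w \<and> gp_eq V E G wg w \<and> m < length w \<and>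
              reduced V E G (take m w) \<and> gp_eq V E G wh (take m w) \<and> fst (w ! m) = v))"
proof -
  interpret gp V E G unfolding gp_def using assms(3,4,5) by blast
  have okw: "word_ok V G wg" "word_ok V G wh" using assms(7,8) by auto
  have oki: "word_ok V G (inv_word G wh @ wg)" using okw word_ok_inv by simp
  have nolink: "\<And>hr u a pre post. reduced V E G hr \<Longrightarrow> gp_eq V E G wh hr \<Longrightarrow> hr = pre@(u,a)#post \<Longrightarrow>
      \<forall>q\<in>set post. E u (fst q) \<Longrightarrow> post \<noteq> [] \<Longrightarrow> E u v \<Longrightarrow> False"
  proof -
    fix hr u a pre post assume r: "reduced V E G hr" "gp_eq V E G wh hr" "hr = pre@(u,a)#post"
      "\<forall>q\<in>set post. E u (fst q)" "post \<noteq> []" "E u v"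
    have ok: "word_ok V G hr" using r(1) unfolding reduced_def by blast
    have sw: "(swap_step V E G)\<^sup>*\<^sup>* hr (pre@post@[(u,a)])" using S2[of V G pre "(u,a)" post E] ok r by auto
    have "reduced V E G (pre@post@[(u,a)])" using red_swaps[OF r(1) sw] .
    moreover have "gp_eq V E G wh (pre@post@[(u,a)])" using gp_trans[OF r(2) gp_swaps[OF sw]] .
    ultimately have "ends_with_link V E G wh v" unfolding ends_with_link_def using r(6) Esym
      by (intro exI[of _ "pre@post@[(u,a)]"]) auto
    then show False using assms(9) by blast
  qed
  have P1: "begins_with V E G (inv_word G wh) v \<and> \<not> begins_with V E G (inv_word G wh @ wg) v \<longrightarrow>
       (\<exists>w m. reduced V E G w \<and> gp_eq V E G wg w \<and> 0 < m \<and> m \<le> length w \<and>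
              reduced V E G (take m w) \<and> gp_eq V E G wh (take m w) \<and> fst (w ! (m - 1)) = v)"
  proof
    assume A: "begins_with V E G (inv_word G wh) v \<and> \<not> begins_with V E G (inv_word G wh @ wg) v"
    then obtain r where r: "gp_eq V E G (inv_word G wh) r" "reduced V E G r" "r \<noteq> []" "fst (hd r) = v"
      unfolding begins_with_def by blast
    define hr where "hr = inv_word G r"
    have okr: "word_ok V G r" using r(2) unfolding reduced_def by blast
    have chr: "crit V E G hr" unfolding hr_def using crit_inv R1 r(2) by blast
    have rhr: "reduced V E G hr" using R2 chr by blast
    have ghr: "gp_eq V E G wh hr" unfolding hr_def using gp_inv[OF r(1)] inv_inv okw by metis
    have hrne: "hr \<noteq> []" and lhr: "fst (last hr) = v" using r(3,4) unfolding hr_def inv_word_def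
      by (auto simp: last_rev hd_map)
    obtain k where k: "gp_eq V E G (inv_word G wh @ wg) k" "reduced V E G k" using exists_red oki by blast
    have ck: "crit V E G k" using R1 k(2) by blast
    have g: "gp_eq V E G wg (hr @ k)" using gp_prod okw rhr ghr k by blast
    have "\<not> badr E (hr @ k)"
    proof
      assume "badr E (hr @ k)"
      then obtain pre u a post where h: "hr = pre@(u,a)#post" "\<forall>q\<in>set post. E u (fst q)" "fm E u k"
        using cross_bad chr ck by blast
      show False
      proof (cases "post = []")
        case True
        then have "u = v" using h(1) lhr by simp
        then obtain mid b ys where kk: "k = mid@(v,b)#ys" "\<forall>q\<in>set mid. E v (fst q)" using fm_dec h(3) by metis
        have okk: "word_ok V G k" using k(2) unfolding reduced_def by blast
        have sw: "(swap_step V E G)\<^sup>*\<^sup>* k ((v,b)#mid@ys)" using S1[of V G "[]" mid "(v,b)" ys E] kk okk Esym by auto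
        have "begins_with V E G (inv_word G wh @ wg) v" unfolding begins_with_def
          using red_swaps[OF k(2) sw] gp_trans[OF k(1) gp_swaps[OF sw]]
          by (intro exI[of _ "(v,b)#mid@ys"]) auto
        then show False using A by blast
      next
        case False
        then have "E u (fst (last post))" using h(2) by auto
        moreover have "last post = last hr" using h(1) False by simp
        ultimately show False using nolink[OF rhr ghr h(1) h(2) False] lhr by simp
      qed
    qed
    then have "crit V E G (hr @ k)" using chr ck unfolding crit_def by auto
    then have "reduced V E G (hr @ k)" using R2 by blast
    moreover have "fst ((hr @ k) ! (length hr - 1)) = v"
      using hrne lhr by (simp add: nth_append last_conv_nth)
    ultimately show "\<exists>w m. reduced V E G w \<and> gp_eq V E G wg w \<and> 0 < m \<and> m \<le> length w \<and>
              reduced V E G (take m w) \<and> gp_eq V E G wh (take m w) \<and> fst (w ! (m - 1)) = v"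
      using g rhr ghr hrne by (intro exI[of _ "hr @ k"] exI[of _ "length hr"]) auto
  qed
  have P2: "begins_with V E G (inv_word G wh @ wg) v \<and> \<not> begins_with V E G (inv_word G wh) v \<longrightarrow>
       (\<exists>w m. reduced V E G w \<and> gp_eq V E G wg w \<and> m < length w \<and>
              reduced V E G (take m w) \<and> gp_eq V E G wh (take m w) \<and> fst (w ! m) = v)"
  proof
    assume A: "begins_with V E G (inv_word G wh @ wg) v \<and> \<not> begins_with V E G (inv_word G wh) v"
    then obtain k where k: "gp_eq V E G (inv_word G wh @ wg) k" "reduced V E G k" "k \<noteq> []" "fst (hd k) = v"
      unfolding begins_with_def by blast
    obtain hr where h0: "gp_eq V E G wh hr" "reduced V E G hr" using exists_red okw by blast
    have chr: "crit V E G hr" using R1 h0(2) by blast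
    have ck: "crit V E G k" using R1 k(2) by blast
    have g: "gp_eq V E G wg (hr @ k)" using gp_prod okw h0 k by blast
    obtain c k' where kc: "k = (v,c)#k'" using k(3,4) by (cases k) auto
    have "\<not> badr E (hr @ k)"
    proof
      assume "badr E (hr @ k)"
      then obtain pre u a post where h: "hr = pre@(u,a)#post" "\<forall>q\<in>set post. E u (fst q)" "fm E u k"
        using cross_bad chr ck by blast
      have okh: "word_ok V G hr" using h0(2) unfolding reduced_def by blast
      have sw: "(swap_step V E G)\<^sup>*\<^sup>* hr (pre@post@[(u,a)])" using S2[of V G pre "(u,a)" post E] okh h by auto
      have r2: "reduced V E G (pre@post@[(u,a)])" using red_swaps[OF h0(2) sw] .
      have g2: "gp_eq V E G wh (pre@post@[(u,a)])" using gp_trans[OF h0(1) gp_swaps[OF sw]] .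
      show False
      proof (cases "E u v")
        case True
        then have "ends_with_link V E G wh v" unfolding ends_with_link_def using r2 g2 Esym
          by (intro exI[of _ "pre@post@[(u,a)]"]) auto
        then show False using assms(9) by blast
      next
        case False
        then have "u = v" using h(3) kc by simp
        have ci: "crit V E G (inv_word G (pre@post@[(u,a)]))" using crit_inv R1 r2 by blast
        have "inv_word G (pre@post@[(u,a)]) = (u, inv\<^bsub>G u\<^esub> a) # inv_word G (pre@post)"
          unfolding inv_word_def by simp
        then have "begins_with V E G (inv_word G wh) v" unfolding begins_with_def
          using R2[OF ci] gp_inv[OF g2] \<open>u = v\<close>
          by (intro exI[of _ "inv_word G (pre@post@[(u,a)])"]) auto
        then show False using A by blast
      qed
    qed
    then have "crit V E G (hr @ k)" using chr ck unfolding crit_def by auto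
    then have "reduced V E G (hr @ k)" using R2 by blast
    then show "\<exists>w m. reduced V E G w \<and> gp_eq V E G wg w \<and> m < length w \<and>
              reduced V E G (take m w) \<and> gp_eq V E G wh (take m w) \<and> fst (w ! m) = v"
      using g h0 kc by (intro exI[of _ "hr @ k"] exI[of _ "length hr"]) auto
  qed
  show ?thesis using P1 P2 by blast
qed

end
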